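(* Let $G$ be a tree with $n\ge k\ge 1$ vertices and let $\mathcal C_0,\dots,\mathcal C_l$ be an optimal (minimum-length) spanning restricted transition walk with $k$ agents, so $l=h^r_k(G)$. Let $y$ be the vertex of $G$ that is encountered last, i.e. the unique vertex of $\mathcal C_j\setminus\mathcal C_{j-1}$ for the largest $j$ at which a vertex not occurring in $\mathcal C_0,\dots,\mathcal C_{j-1}$ appears, and let $x$ be a vertex of $\mathcal C_0$ farthest (in $G$) from $y$. Let $P_{xy}$ be the path of $G$ between $x$ and $y$. Then $l \ge (n-k)+\sum_{e\in E} d^k_{P_{xy}}(e)$.
   Context: All graphs are finite, simple, undirected. A configuration of $k$ agents is a $k$-tuple of pairwise distinct vertices of $G$ whose induced subgraph is connected (identified with its vertex set when convenient). Configurations $(v_1,\dots,v_k)$, $(v'_1,\dots,v'_k)$ are adjacent if for every $i$ either $v_i=v'_i$ or $(v_i,v'_i)\in E$. A restricted transition walk is a sequence of configurations $\mathcal C_0,\dots,\mathcal C_l$ such that consecutive configurations are adjacent and $\mathcal C_{t+1}$ contains exactly one vertex not in $\mathcal C_t$ (a $1$-transition edge); it is spanning if every vertex lies in some $\mathcal C_t$. $h^r_k(G)$ is the minimum length of a spanning restricted transition walk. For a tree $G$, a path $P$ in $G$ and $k\ge1$, define $d^k_P(e)\in\{0,1\}$ for every edge $e$: $d^k_P(e)=0$ if $e$ lies on $P$; otherwise write $e=(u,v)$ with $u$ closer to $P$ than $v$, let $T_P(e)$ be the component of $G-e$ containing $v$, rooted at $v$, and set $d^k_P(e)=1$ if $T_P(e)$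 has height at least $k-1$ (equivalently, some vertex $z$ of $T_P(e)$ has distance at least $k$ from $u$), and $d^k_P(e)=0$ otherwise. *)

theory Defs
  imports Main
begin

definition gpath :: "'a set \<Rightarrow> 'a set set \<Rightarrow> 'a \<Rightarrow> 'a \<Rightarrow> 'a list \<Rightarrow> bool" where
  "gpath V E u v p \<longleftrightarrow> p \<noteq> [] \<and> hd p = u \<and> last p = v \<and> set p \<subseteq> V \<and> distinct p
     \<and> (\<forall>i. Suc i < length p \<longrightarrow> {p ! i, p ! Suc i} \<in> E)"

definition graph_connected :: "'a set \<Rightarrow> 'a set set \<Rightarrow> bool" where
  "graph_connected V E \<longleftrightarrow> (\<forall>u\<in>V. \<forall>v\<in>V. \<exists>p. gpath V E u v p)"

definition simple_graph :: "'a set \<Rightarrow> 'a set set \<Rightarrow> bool" where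
  "simple_graph V E \<longleftrightarrow> finite V \<and> (\<forall>e\<in>E. card e = 2 \<and> e \<subseteq> V)"

definition is_tree :: "'a set \<Rightarrow> 'a set set \<Rightarrow> bool" where
  "is_tree V E \<longleftrightarrow> simple_graph V E \<and> V \<noteq> {} \<and> (\<forall>u\<in>V. \<forall>v\<in>V. \<exists>!p. gpath V E u v p)"

definition gdist :: "'a set \<Rightarrow> 'a set set \<Rightarrow> 'a \<Rightarrow> 'a \<Rightarrow> nat" where
  "gdist V E u v = (LEAST n. \<exists>p. gpath V E u v p \<and> length p = Suc n)"

definition path_edges :: "'a list \<Rightarrow> 'a set set" where
  "path_edges p = {{p ! i, p ! Suc i} | i. Suc i < length p}"

definition dist_to_path :: "'a set \<Rightarrow> 'a set set \<Rightarrow> 'a list \<Rightarrow> 'a \<Rightarrow> nat" where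
  "dist_to_path V E P w = Min ((\<lambda>q. gdist V E q w) ` set P)"

definition component :: "'a set \<Rightarrow> 'a set set \<Rightarrow> 'a \<Rightarrow> 'a set" where
  "component V E v = {z\<in>V. \<exists>p. gpath V E v z p}"

text \<open>The indicator d^k_P(e): for e = (u,v) off P with u closer to P, T_P(e) is the component
  of G - e containing v, rooted at v; d = 1 iff T_P(e) has height at least k - 1.\<close>
definition dkP :: "'a set \<Rightarrow> 'a set set \<Rightarrow> nat \<Rightarrow> 'a list \<Rightarrow> 'a set \<Rightarrow> nat" where
  "dkP V E k P e =
     (if e \<in> path_edges P then 0
      else if (\<exists>u v. e = {u, v} \<and> dist_to_path V E P u < dist_to_path V E P v \<and>
                 (\<exists>z\<in>component V (E - {e}) v. gdist V (E - {e}) v z \<ge> k - 1))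
      then 1 else 0)"

definition config :: "'a set \<Rightarrow> 'a set set \<Rightarrow> nat \<Rightarrow> 'a list \<Rightarrow> bool" where
  "config V E k C \<longleftrightarrow> length C = k \<and> distinct C \<and> set C \<subseteq> V \<and>
     graph_connected (set C) {e\<in>E. e \<subseteq> set C}"

definition config_adj :: "'a set set \<Rightarrow> 'a list \<Rightarrow> 'a list \<Rightarrow> bool" where
  "config_adj E C D \<longleftrightarrow> list_all2 (\<lambda>a b. a = b \<or> {a, b} \<in> E) C D"

text \<open>Restricted transition walk C_0,...,C_l (list of length l+1).\<close>
definition rt_walk :: "'a set \<Rightarrow> 'a set set \<Rightarrow> nat \<Rightarrow> 'a list list \<Rightarrow> bool" where
  "rt_walk V E k Cs \<longleftrightarrow> Cs \<noteq> [] \<and> (\<forall>C\<in>set Cs. config V E k C) \<and>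
     (\<forall>t. Suc t < length Cs \<longrightarrow> config_adj E (Cs ! t) (Cs ! Suc t) \<and>
          card (set (Cs ! Suc t) - set (Cs ! t)) = 1)"

definition spanning :: "'a set \<Rightarrow> 'a list list \<Rightarrow> bool" where
  "spanning V Cs \<longleftrightarrow> (\<Union>C\<in>set Cs. set C) = V"

definition hr :: "'a set \<Rightarrow> 'a set set \<Rightarrow> nat \<Rightarrow> nat" where
  "hr V E k = (LEAST l. \<exists>Cs. rt_walk V E k Cs \<and> spanning V Cs \<and> length Cs = Suc l)"

end

theory Submission
  imports Defs
begin

lemma gpath_rev: "gpath V E u v p \<Longrightarrow> gpath V E v u (rev p)"
  unfolding gpath_def
proof (intro conjI allI impI; (elim conjE)?)
  fix i assume g: "p \<noteq> []" "hd p = u" "last p = v" "set p \<subseteq> V" "distinct p"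
    "\<forall>i. Suc i < length p \<longrightarrow> {p ! i, p ! Suc i} \<in> E" and i: "Suc i < length (rev p)"
  let ?j = "length p - Suc (Suc i)"
  have j: "Suc ?j < length p" using i by simp
  have "{p!?j, p!Suc ?j} \<in> E" using g(6) j by blast
  moreover have "rev p ! i = p ! Suc ?j" using i by (simp add: rev_nth Suc_diff_Suc)
  moreover have "rev p ! Suc i = p ! ?j" using i by (simp add: rev_nth)
  ultimately show "{rev p ! i, rev p ! Suc i} \<in> E" by (simp add: insert_commute)
qed (auto simp: hd_rev last_rev)

lemma gpath_mono: "gpath V E u v p \<Longrightarrow> E \<subseteq> E' \<Longrightarrow> V \<subseteq> V' \<Longrightarrow> gpath V' E' u v p"
  unfolding gpath_def by blast

lemma gpath_take: "gpath V E u v p \<Longrightarrow> i < length p \<Longrightarrow> gpath V E u (p!i) (take (Suc i) p)"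
  unfolding gpath_def
  by (auto simp: last_conv_nth hd_take dest: in_set_takeD)

lemma gpath_snoc: "gpath V E u v p \<Longrightarrow> w \<in> V \<Longrightarrow> w \<notin> set p \<Longrightarrow> {v,w} \<in> E \<Longrightarrow> gpath V E u w (p@[w])"
  unfolding gpath_def
proof (intro conjI allI impI; (elim conjE)?)
  fix i assume g: "p \<noteq> []" "hd p = u" "last p = v" "set p \<subseteq> V" "distinct p"
    "\<forall>i. Suc i < length p \<longrightarrow> {p ! i, p ! Suc i} \<in> E" "w \<in> V" "w \<notin> set p" "{v,w} \<in> E"
    and i: "Suc i < length (p@[w])"
  show "{(p@[w]) ! i, (p@[w]) ! Suc i} \<in> E"
  proof (cases "Suc i < length p")
    case True then show ?thesis using g(6) by (simp add: nth_append)
  next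
    case False then have "Suc i = length p" using i by simp
    then have ii: "i = length p - 1" by simp
    have "p!i = v" unfolding ii using g(1,3) last_conv_nth[of p] by simp
    moreover have "(p@[w])!i = p!i" using \<open>Suc i = length p\<close> by (simp add: nth_append)
    moreover have "(p@[w])!Suc i = w" using \<open>Suc i = length p\<close> by (metis nth_append_length)
    ultimately show ?thesis using g(9) by simp
  qed
qed auto

lemma gdist_le: "gpath V E u v p \<Longrightarrow> gdist V E u v \<le> length p - 1"
  unfolding gdist_def
  by (rule Least_le) (auto simp: gpath_def)

lemma gdist_ex: "gpath V E u v p \<Longrightarrow> \<exists>q. gpath V E u v q \<and> length q = Suc (gdist V E u v)"
  unfolding gdist_def
  apply (rule LeastI_ex)
  apply (rule exI[of _ "length p - 1"])
  by (auto simp: gpath_def)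

lemma comp_closed: "a \<in> component V E v \<Longrightarrow> {a,w} \<in> E \<Longrightarrow> w \<in> V \<Longrightarrow> w \<in> component V E v"
proof -
  assume a: "a \<in> component V E v" and e: "{a,w} \<in> E" and w: "w \<in> V"
  then obtain p where p: "gpath V E v a p" by (auto simp: component_def)
  show ?thesis
  proof (cases "w \<in> set p")
    case True then obtain i where "i < length p" "w = p!i" by (metis in_set_conv_nth)
    then show ?thesis using gpath_take[OF p] w by (auto simp: component_def)
  next
    case False then show ?thesis using gpath_snoc[OF p w False e] w by (auto simp: component_def)
  qed
qed

lemma crossing:
  assumes "gpath V E a b p" "a \<in> S" "b \<notin> S"
  shows "\<exists>i. Suc i < length p \<and> (\<forall>m\<le>i. p!m \<in> S) \<and> p!Suc i \<notin> S"
proof -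
  have ne: "p \<noteq> []" and hd: "hd p = a" and lst: "last p = b" using assms(1) by (auto simp: gpath_def)
  have ex: "\<exists>m. m < length p \<and> p!m \<notin> S"
    using ne lst assms(3) by (intro exI[of _ "length p - 1"]) (auto simp: last_conv_nth)
  define m where "m = (LEAST m. m < length p \<and> p!m \<notin> S)"
  have m: "m < length p" "p!m \<notin> S" using LeastI_ex[OF ex] unfolding m_def by auto
  have m0: "m \<noteq> 0" 
  proof
    assume "m = 0" then have "p!m = a" using ne hd hd_conv_nth[of p] by simp
    then show False using m(2) assms(2) by simp
  qed
  have lt: "p!i \<in> S" if "i < m" for i
  proof -
    have "\<not> (i < length p \<and> p!i \<notin> S)"
      using not_less_Least[where P="\<lambda>m. m < length p \<and> p!m \<notin> S"] that unfolding m_def by blast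
    then show ?thesis using that m(1) by simp
  qed
  have sm: "Suc (m - 1) = m" using m0 by simp
  show ?thesis
  proof (intro exI[of _ "m - 1"] conjI allI impI)
    show "Suc (m - 1) < length p" using sm m(1) by simp
    show "p ! Suc (m - 1) \<notin> S" using sm m(2) by simp
    fix m' assume "m' \<le> m - 1" then have "m' < m" using m0 by simp
    then show "p!m' \<in> S" by (rule lt)
  qed
qed



lemma tree_sg: "is_tree V E \<Longrightarrow> simple_graph V E" by (simp add: is_tree_def)

lemma edge_facts:
  assumes "simple_graph V E" "e \<in> E" "e = {u,v}"
  shows "u \<in> V" "v \<in> V" "u \<noteq> v"
proof -
  have c: "card e = 2" "e \<subseteq> V" using assms(1,2) unfolding simple_graph_def by blast+
  then show "u \<in> V" "v \<in> V" using assms(3) by blast+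
  show "u \<noteq> v"
  proof
    assume "u = v" then have "card e = 1" using assms(3) by simp
    then show False using c by simp
  qed
qed

lemma v_in_comp: "v \<in> V \<Longrightarrow> v \<in> component V E' v"
  by (auto simp: component_def gpath_def intro!: exI[of _ "[v]"])

lemma L_exit:
  assumes sg: "simple_graph V E" and e: "e \<in> E" "e = {u,v}"
    and uT: "u \<notin> component V (E-{e}) v" and a: "a \<in> component V (E-{e}) v"
    and b: "b \<notin> component V (E-{e}) v" and ab: "{a,b} \<in> E"
  shows "b = u \<and> a = v"
proof -
  have bV: "b \<in> V" using sg ab by (auto simp: simple_graph_def)
  have "{a,b} = e"
  proof (rule ccontr)
    assume "{a,b} \<noteq> e"
    then have "{a,b} \<in> E - {e}" using ab by simp
    then have "b \<in> component V (E-{e}) v" using comp_closed[OF a _ bV] by simp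
    then show False using b by simp
  qed
  moreover have "v \<in> component V (E-{e}) v" using edge_facts[OF sg e] v_in_comp by metis
  ultimately have "a \<in> e" "b \<in> e" "a \<noteq> u" "b \<noteq> v" using a b uT by blast+
  then show ?thesis using e(2) by blast
qed


lemma L_u_notin:
  assumes t: "is_tree V E" and e: "e \<in> E" "e = {u,v}"
  shows "u \<notin> component V (E-{e}) v"
proof
  assume "u \<in> component V (E-{e}) v"
  then obtain p where p: "gpath V (E-{e}) v u p" by (auto simp: component_def)
  have sg: "simple_graph V E" using t by (simp add: is_tree_def)
  note ef = edge_facts[OF sg e]
  have r: "gpath V E u v (rev p)" using gpath_mono[OF gpath_rev[OF p]] by blast
  have uv: "gpath V E u v [u,v]"
    unfolding gpath_def
  proof (intro conjI allI impI)
    show "set [u,v] \<subseteq> V" using ef by simp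
    show "distinct [u,v]" using ef by simp
    fix i assume "Suc i < length [u,v]" then have "i = 0" by simp
    then show "{[u,v] ! i, [u,v] ! Suc i} \<in> E" using e by simp
  qed simp_all
  have "\<exists>!p. gpath V E u v p" using t ef unfolding is_tree_def by blast
  then have "rev p = [u,v]" using r uv by blast
  then have pvu: "p = [v,u]" by (metis rev_rev_ident rev.simps(1) rev.simps(2) append.simps)
  have "\<forall>i. Suc i < length p \<longrightarrow> {p ! i, p ! Suc i} \<in> E - {e}" using p unfolding gpath_def by blast
  then have "{p ! 0, p ! Suc 0} \<in> E - {e}" using pvu by simp
  then have "{v,u} \<in> E - {e}" using pvu by simp
  then show False using e by (simp add: insert_commute)
qed

lemma gdist_cross:
  assumes t: "is_tree V E" and e: "e \<in> E" "e = {u,v}"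
    and uT: "u \<notin> component V (E-{e}) v" and q: "q \<in> component V (E-{e}) v"
  shows "gdist V E q v < gdist V E q u"
proof -
  have sg: "simple_graph V E" using t by (simp add: is_tree_def)
  note ef = edge_facts[OF sg e]
  have qV: "q \<in> V" using q by (auto simp: component_def)
  have "\<exists>!p. gpath V E q u p" using t qV ef(1) unfolding is_tree_def by blast
  then obtain p where pp: "gpath V E q u p" using ex1_implies_ex by metis
  obtain p0 where p0: "gpath V E q u p0" "length p0 = Suc (gdist V E q u)"
    using gdist_ex[OF pp] by (elim exE conjE)
  obtain i where i: "Suc i < length p0" "\<forall>m\<le>i. p0!m \<in> component V (E-{e}) v"
    "p0!Suc i \<notin> component V (E-{e}) v"
    using crossing[OF p0(1) q uT] by blast
  have "\<forall>i. Suc i < length p0 \<longrightarrow> {p0!i, p0!Suc i} \<in> E" using p0(1) unfolding gpath_def by blast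
  then have ed: "{p0!i, p0!Suc i} \<in> E" using i(1) by blast
  have piT: "p0!i \<in> component V (E-{e}) v" using i(2) by simp
  have "p0!i = v" using L_exit[OF sg e uT piT i(3) ed] by blast
  then have tk: "gpath V E q v (take (Suc i) p0)" using gpath_take[OF p0(1), of i] i(1) by simp
  have "length (take (Suc i) p0) = Suc i" using i(1) by simp
  then have "gdist V E q v \<le> i" using gdist_le[OF tk] by simp
  then show ?thesis using i(1) p0(2) by simp
qed

lemma L_P_disjoint:
  assumes t: "is_tree V E" and e: "e \<in> E" "e = {u,v}" and eP: "e \<notin> path_edges P"
    and P: "gpath V E x y P" and d: "dist_to_path V E P u < dist_to_path V E P v"
  shows "set P \<inter> component V (E-{e}) v = {}"
proof (rule ccontr)
  let ?T = "component V (E-{e}) v"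
  assume "set P \<inter> ?T \<noteq> {}"
  then obtain i0 where i0: "i0 < length P" "P!i0 \<in> ?T" by (metis disjoint_iff in_set_conv_nth)
  have sg: "simple_graph V E" using t by (simp add: is_tree_def)
  have PV: "set P \<subseteq> V" and Pne: "P \<noteq> []" using P by (auto simp: gpath_def)
  have step: "P!i \<in> ?T \<longleftrightarrow> P!Suc i \<in> ?T" if "Suc i < length P" for i
  proof -
    have ed: "{P!i, P!Suc i} \<in> E" using P that by (auto simp: gpath_def)
    have "{P!i, P!Suc i} \<noteq> e" using eP that unfolding path_edges_def by blast
    then have ed': "{P!i, P!Suc i} \<in> E - {e}" "{P!Suc i, P!i} \<in> E - {e}"
      using ed by (auto simp: insert_commute)
    have V: "P!i \<in> V" "P!Suc i \<in> V" using PV that by auto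
    show ?thesis using comp_closed[OF _ ed'(1) V(2)] comp_closed[OF _ ed'(2) V(1)] by blast
  qed
  have all: "\<forall>i<length P. (P!i \<in> ?T \<longleftrightarrow> P!0 \<in> ?T)"
  proof (intro allI impI)
    fix i assume "i < length P" then show "P!i \<in> ?T \<longleftrightarrow> P!0 \<in> ?T"
      by (induction i) (auto simp: step)
  qed
  have allT: "\<forall>q\<in>set P. q \<in> ?T" using all i0 by (metis in_set_conv_nth)
  have uT: "u \<notin> ?T" using L_u_notin[OF t e] .
  let ?fu = "\<lambda>q. gdist V E q u" and ?fv = "\<lambda>q. gdist V E q v"
  have fin: "finite (?fu ` set P)" "?fu ` set P \<noteq> {}" using Pne by auto
  obtain q1 where q1: "q1 \<in> set P" "Min (?fu ` set P) = ?fu q1" using Min_in[OF fin] by auto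
  have "?fv q1 < ?fu q1" using gdist_cross[OF t e uT] allT q1(1) by blast
  moreover have "Min (?fv ` set P) \<le> ?fv q1" using q1(1) by simp
  ultimately have "dist_to_path V E P v < dist_to_path V E P u"
    unfolding dist_to_path_def using q1(2) by linarith
  then show False using d by simp
qed

lemma L_config:
  assumes sg: "simple_graph V E" and e: "e \<in> E" "e = {u,v}"
    and uT: "u \<notin> component V (E-{e}) v" and C: "config V E k C"
    and z: "z \<in> set C" "z \<in> component V (E-{e}) v"
    and k: "k - 1 \<le> gdist V (E-{e}) v z" "1 \<le> k"
  shows "set C \<subseteq> component V (E-{e}) v"
proof (rule ccontr)
  let ?T = "component V (E-{e}) v"
  assume "\<not> set C \<subseteq> ?T"
  then obtain w where w: "w \<in> set C" "w \<notin> ?T" by blast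
  have Cc: "graph_connected (set C) {e\<in>E. e \<subseteq> set C}" and CV: "set C \<subseteq> V"
    and Cl: "length C = k" "distinct C" using C by (auto simp: config_def)
  obtain p where p: "gpath (set C) {e\<in>E. e \<subseteq> set C} z w p" using Cc z w unfolding graph_connected_def by blast
  obtain i where i: "Suc i < length p" "\<forall>m\<le>i. p!m \<in> ?T" "p!Suc i \<notin> ?T"
    using crossing[OF p z(2) w(2)] by blast
  have "{p!i, p!Suc i} \<in> E" using p i(1) by (auto simp: gpath_def)
  then have pi: "p!i = v" using L_exit[OF sg e uT] i by blast
  have tk: "gpath V (E-{e}) z v (take (Suc i) p)"
    unfolding gpath_def
  proof (intro conjI allI impI)
    show "take (Suc i) p \<noteq> []" using i(1) by (cases p) auto
    show "hd (take (Suc i) p) = z" using p i(1) by (auto simp: gpath_def hd_take)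
    show "last (take (Suc i) p) = v" using pi i(1) by (subst last_conv_nth) (auto simp: min_def)
    show "set (take (Suc i) p) \<subseteq> V" using p CV by (auto simp: gpath_def dest: in_set_takeD)
    show "distinct (take (Suc i) p)" using p by (auto simp: gpath_def)
    fix m assume m: "Suc m < length (take (Suc i) p)"
    then have m': "Suc m \<le> i" "Suc m < length p" by auto
    have "{p!m, p!Suc m} \<in> E" using p m' by (auto simp: gpath_def)
    moreover have "p!m \<in> ?T" "p!Suc m \<in> ?T" using i(2) m' by auto
    then have "{p!m, p!Suc m} \<noteq> e" using uT e by (auto simp: doubleton_eq_iff)
    ultimately show "{take (Suc i) p ! m, take (Suc i) p ! Suc m} \<in> E - {e}" using m' by simp
  qed
  have "gdist V (E-{e}) v z \<le> i" using gdist_le[OF gpath_rev[OF tk]] i(1) by simp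
  moreover have "length p \<le> k"
  proof -
    have "set p \<subseteq> set C" "distinct p" using p by (auto simp: gpath_def)
    then have "card (set p) \<le> card (set C)" by (simp add: card_mono)
    then show ?thesis using Cl \<open>distinct p\<close> by (simp add: distinct_card)
  qed
  ultimately show False using k i(1) by linarith
qed



lemma W_cfg: "rt_walk V E k Cs \<Longrightarrow> i < length Cs \<Longrightarrow> config V E k (Cs!i)"
  by (auto simp: rt_walk_def)

lemma W_card: "rt_walk V E k Cs \<Longrightarrow> Suc t < length Cs \<Longrightarrow> card (set (Cs!Suc t) - set (Cs!t)) = 1"
  by (auto simp: rt_walk_def)

lemma W_adj: "rt_walk V E k Cs \<Longrightarrow> Suc t < length Cs \<Longrightarrow>
   length (Cs!t) = length (Cs!Suc t) \<and> (\<forall>i<length (Cs!t). Cs!t!i = Cs!Suc t!i \<or> {Cs!t!i, Cs!Suc t!i} \<in> E)"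
  by (auto simp: rt_walk_def config_adj_def list_all2_conv_all_nth)

lemma agent_in: "rt_walk V E k Cs \<Longrightarrow> Suc t < length Cs \<Longrightarrow> w \<in> set (Cs!Suc t) \<Longrightarrow>
   \<exists>a\<in>set (Cs!t). a = w \<or> {a,w} \<in> E"
proof -
  assume r: "rt_walk V E k Cs" "Suc t < length Cs" "w \<in> set (Cs!Suc t)"
  then obtain i where i: "i < length (Cs!Suc t)" "w = Cs!Suc t!i" by (metis in_set_conv_nth)
  from W_adj[OF r(1,2)] i show ?thesis by (metis nth_mem)
qed

lemma agent_out: "rt_walk V E k Cs \<Longrightarrow> Suc t < length Cs \<Longrightarrow> a \<in> set (Cs!t) \<Longrightarrow>
   \<exists>b\<in>set (Cs!Suc t). a = b \<or> {a,b} \<in> E"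
proof -
  assume r: "rt_walk V E k Cs" "Suc t < length Cs" "a \<in> set (Cs!t)"
  then obtain i where i: "i < length (Cs!t)" "a = Cs!t!i" by (metis in_set_conv_nth)
  from W_adj[OF r(1,2)] i show ?thesis by (metis nth_mem)
qed

lemma card1_eq: "card A = 1 \<Longrightarrow> a \<in> A \<Longrightarrow> b \<in> A \<Longrightarrow> a = b"
  by (metis card_1_singletonE singletonD)

lemma edge_lemma:
  assumes t: "is_tree V E" and k1: "1 \<le> k"
    and W: "rt_walk V E k Cs" and sp: "spanning V Cs"
    and j: "1 \<le> j" "j < length Cs"
    and y: "y \<in> set (Cs ! j)" "\<forall>i<j. y \<notin> set (Cs ! i)"
    and late: "\<forall>j'. j < j' \<and> j' < length Cs \<longrightarrow> set (Cs ! j') \<subseteq> (\<Union>i<j'. set (Cs ! i))"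
    and x: "x \<in> set (Cs ! 0)" and P: "gpath V E x y P"
    and e: "e \<in> E" "e = {u,v}" and eP: "e \<notin> path_edges P"
    and d: "dist_to_path V E P u < dist_to_path V E P v"
    and z: "z \<in> component V (E-{e}) v" and zk: "k - 1 \<le> gdist V (E-{e}) v z"
  shows "\<exists>t. 0 < t \<and> t < length Cs \<and>
     (\<exists>w s. w \<in> set (Cs!t) \<and> w \<notin> set (Cs!(t-1)) \<and> s < t \<and> w \<in> set (Cs!s)) \<and>
     (\<exists>a b. a \<in> set (Cs!(t-1)) \<and> b \<in> set (Cs!t) - set (Cs!(t-1)) \<and> {a,b} \<in> E) \<and>
     (\<forall>a\<in>set (Cs!(t-1)). \<forall>b\<in>set (Cs!t) - set (Cs!(t-1)). {a,b} \<in> E \<longrightarrow> {a,b} = e)"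
proof -
  let ?T = "component V (E-{e}) v"
  have sg: "simple_graph V E" using t by (simp add: is_tree_def)
  have uT: "u \<notin> ?T" using L_u_notin[OF t e] .
  have disj: "set P \<inter> ?T = {}" using L_P_disjoint[OF t e eP P d] .
  have xT: "x \<notin> ?T" and yT: "y \<notin> ?T" using disj P unfolding gpath_def by (metis disjoint_iff hd_in_set last_in_set)+
  have cfg: "set (Cs!i) \<subseteq> ?T" if "i < length Cs" "z \<in> set (Cs!i)" for i
    using L_config[OF sg e uT W_cfg[OF W that(1)] that(2) z zk k1] .
  have zV: "z \<in> V" using z by (auto simp: component_def)
  have ex0: "\<exists>i. i < length Cs \<and> z \<in> set (Cs!i)"
  proof -
    have "z \<in> (\<Union>C\<in>set Cs. set C)" using sp zV unfolding spanning_def by simp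
    then obtain C where "C \<in> set Cs" "z \<in> set C" by blast
    then show ?thesis by (metis in_set_conv_nth)
  qed
  define t0 where "t0 = (LEAST i. i < length Cs \<and> z \<in> set (Cs!i))"
  have t0: "t0 < length Cs" "z \<in> set (Cs!t0)" using LeastI_ex[OF ex0] unfolding t0_def by auto
  have t0b: "z \<notin> set (Cs!i)" if "i < t0" for i
    using not_less_Least[of i "\<lambda>i. i < length Cs \<and> z \<in> set (Cs!i)"] that t0(1)
    unfolding t0_def by auto
  have zy: "z \<noteq> y" using z yT by auto
  have t0j: "t0 < j"
  proof (rule ccontr)
    assume "\<not> t0 < j"
    then consider "t0 = j" | "j < t0" by linarith
    then show False
    proof cases
      case 1
      have s: "Suc (j-1) < length Cs" using j by simp
      have "card (set (Cs!j) - set (Cs!(j-1))) = 1" using W_card[OF W s] j by simp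
      moreover have "y \<in> set (Cs!j) - set (Cs!(j-1))" using y j by simp
      moreover have "z \<in> set (Cs!j) - set (Cs!(j-1))" using t0 t0b 1 j by simp
      ultimately show False using zy card1_eq[of "set (Cs!j) - set (Cs!(j-1))" y z] by blast
    next
      case 2
      then have "set (Cs!t0) \<subseteq> (\<Union>i<t0. set (Cs ! i))" using late t0(1) by blast
      then obtain i where "i < t0" "z \<in> set (Cs!i)" using t0(2) by blast
      then show False using t0b by blast
    qed
  qed
  have Ct0: "set (Cs!t0) \<subseteq> ?T" using cfg t0 by blast
  have ex1: "\<exists>t. t0 < t \<and> t < length Cs \<and> \<not> set (Cs!t) \<subseteq> ?T"
  proof -
    have "\<not> set (Cs!j) \<subseteq> ?T" using y(1) yT by blast
    then show ?thesis using t0j j(2) by blast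
  qed
  define t1 where "t1 = (LEAST t. t0 < t \<and> t < length Cs \<and> \<not> set (Cs!t) \<subseteq> ?T)"
  have t1: "t0 < t1" "t1 < length Cs" "\<not> set (Cs!t1) \<subseteq> ?T"
    using LeastI_ex[OF ex1] unfolding t1_def by auto
  have t1b: "set (Cs!i) \<subseteq> ?T" if "t0 < i" "i < t1" for i
    using not_less_Least[of i "\<lambda>t. t0 < t \<and> t < length Cs \<and> \<not> set (Cs!t) \<subseteq> ?T"] that t1(2)
    unfolding t1_def by auto
  have Cprev: "set (Cs!(t1-1)) \<subseteq> ?T"
  proof (cases "t1 - 1 = t0")
    case True then show ?thesis using Ct0 by simp
  next
    case False then show ?thesis using t1b t1(1) by simp
  qed
  obtain w where w: "w \<in> set (Cs!t1)" "w \<notin> ?T" using t1(3) by blast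
  have s1: "Suc (t1-1) < length Cs" "Suc (t1-1) = t1" using t1 by auto
  obtain a where a: "a \<in> set (Cs!(t1-1))" "a = w \<or> {a,w} \<in> E"
    using agent_in[OF W s1(1)] w(1) s1(2) by metis
  have aT: "a \<in> ?T" using a Cprev by blast
  have "{a,w} \<in> E" using a aT w by auto
  then have wu: "w = u" using L_exit[OF sg e uT aT w(2)] by simp
  have uprev: "u \<notin> set (Cs!(t1-1))" using Cprev uT by blast
  have new: "u \<in> set (Cs!t1) - set (Cs!(t1-1))" using w wu uprev by simp
  have cd: "card (set (Cs!t1) - set (Cs!(t1-1))) = 1" using W_card[OF W s1(1)] s1(2) by simp
  have ex2: "\<exists>s. s < length Cs \<and> set (Cs!s) \<subseteq> ?T" using Ct0 t0 by blast
  define s0 where "s0 = (LEAST s. s < length Cs \<and> set (Cs!s) \<subseteq> ?T)"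
  have s0: "s0 < length Cs" "set (Cs!s0) \<subseteq> ?T" using LeastI_ex[OF ex2] unfolding s0_def by auto
  have s0le: "s0 \<le> t0" using Least_le[of "\<lambda>s. s < length Cs \<and> set (Cs!s) \<subseteq> ?T" t0] Ct0 t0
    unfolding s0_def by blast
  have s00: "s0 \<noteq> 0"
  proof
    assume "s0 = 0" then show False using s0 x xT by auto
  qed
  have s0b: "\<not> set (Cs!(s0-1)) \<subseteq> ?T"
    using not_less_Least[of "s0-1" "\<lambda>s. s < length Cs \<and> set (Cs!s) \<subseteq> ?T"] s00 s0(1)
    unfolding s0_def by auto
  obtain w' where w': "w' \<in> set (Cs!(s0-1))" "w' \<notin> ?T" using s0b by blast
  have s2: "Suc (s0-1) < length Cs" "Suc (s0-1) = s0" using s0 s00 by auto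
  obtain b where b: "b \<in> set (Cs!s0)" "w' = b \<or> {w',b} \<in> E"
    using agent_out[OF W s2(1) w'(1)] s2(2) by metis
  have bT: "b \<in> ?T" using b s0 by blast
  have "{b,w'} \<in> E" using b bT w' by (auto simp: insert_commute)
  then have w'u: "w' = u" using L_exit[OF sg e uT bT w'(2)] by simp
  show ?thesis
  proof (intro exI[of _ t1] conjI)
    show "0 < t1" "t1 < length Cs" using t1 by auto
    show "\<exists>w s. w \<in> set (Cs!t1) \<and> w \<notin> set (Cs!(t1-1)) \<and> s < t1 \<and> w \<in> set (Cs!s)"
      using new w' w'u s0le t1(1) s00 by (intro exI[of _ u] exI[of _ "s0-1"]) auto
    show "\<exists>a b. a \<in> set (Cs!(t1-1)) \<and> b \<in> set (Cs!t1) - set (Cs!(t1-1)) \<and> {a,b} \<in> E"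
      using a(1) new \<open>{a,w} \<in> E\<close> wu by blast
    show "\<forall>a\<in>set (Cs!(t1-1)). \<forall>b\<in>set (Cs!t1) - set (Cs!(t1-1)). {a,b} \<in> E \<longrightarrow> {a,b} = e"
    proof (intro ballI impI)
      fix a' b' assume a': "a' \<in> set (Cs!(t1-1))" and b': "b' \<in> set (Cs!t1) - set (Cs!(t1-1))"
        and ab: "{a',b'} \<in> E"
      have "b' = u" using card1_eq[OF cd b' new] .
      have a'T: "a' \<in> ?T" using a' Cprev by blast
      have b'T: "b' \<notin> ?T" using \<open>b' = u\<close> uT by simp
      have "b' = u \<and> a' = v" using L_exit[OF sg e uT a'T b'T ab] .
      then have "{a',b'} = {v,u}" by simp
      also have "\<dots> = {u,v}" by (rule insert_commute)
      finally show "{a',b'} = e" using e(2) by simp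
    qed
  qed
qed


theorem mainTheorem5:
  fixes V :: "'a set" and E :: "'a set set" and k j :: nat and Cs :: "'a list list"
    and x y :: 'a and P :: "'a list"
  assumes "is_tree V E"
    and "1 \<le> k" and "k \<le> card V"
    and "rt_walk V E k Cs" and "spanning V Cs" and "length Cs = Suc (hr V E k)"
    and "1 \<le> j" and "j < length Cs"
    and "y \<in> set (Cs ! j)" and "\<forall>i<j. y \<notin> set (Cs ! i)"
    and "\<forall>j'. j < j' \<and> j' < length Cs \<longrightarrow> set (Cs ! j') \<subseteq> (\<Union>i<j'. set (Cs ! i))"
    and "x \<in> set (Cs ! 0)" and "\<forall>z\<in>set (Cs ! 0). gdist V E z y \<le> gdist V E x y"
    and "gpath V E x y P"
  shows "hr V E k \<ge> (card V - k) + (\<Sum>e\<in>E. dkP V E k P e)"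
proof -
  note as = assms
  define Q where "Q = (\<lambda>e t. 0 < t \<and> t < length Cs \<and>
     (\<exists>w s. w \<in> set (Cs!t) \<and> w \<notin> set (Cs!(t-1)) \<and> s < t \<and> w \<in> set (Cs!s)) \<and>
     (\<exists>a b. a \<in> set (Cs!(t-1)) \<and> b \<in> set (Cs!t) - set (Cs!(t-1)) \<and> {a,b} \<in> E) \<and>
     (\<forall>a\<in>set (Cs!(t-1)). \<forall>b\<in>set (Cs!t) - set (Cs!(t-1)). {a,b} \<in> E \<longrightarrow> {a,b} = e))"
  define A where "A = {e\<in>E. dkP V E k P e \<noteq> 0}"
  have sg: "simple_graph V E" using as(1) by (simp add: is_tree_def)
  have finV: "finite V" using sg by (simp add: simple_graph_def)
  have finE: "finite E" using sg finV
    by (metis (no_types, lifting) Pow_iff finite_Pow_iff finite_subset simple_graph_def subsetI)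
  have AE: "A \<subseteq> E" unfolding A_def by auto
  have finA: "finite A" using finE AE finite_subset by blast
  have d1: "dkP V E k P e = 1" if "e \<in> A" for e using that unfolding A_def dkP_def
    by (auto split: if_splits)
  have sumA: "(\<Sum>e\<in>E. dkP V E k P e) = card A"
  proof -
    have "(\<Sum>e\<in>E. dkP V E k P e) = (\<Sum>e\<in>A. dkP V E k P e)"
      by (rule sum.mono_neutral_right[OF finE AE]) (auto simp: A_def)
    also have "\<dots> = (\<Sum>e\<in>A. 1)" using d1 by simp
    finally show ?thesis by simp
  qed
  have exQ: "\<forall>e\<in>A. \<exists>t. Q e t"
  proof
    fix e assume eA: "e \<in> A"
    then have eE: "e \<in> E" and nz: "dkP V E k P e \<noteq> 0" unfolding A_def by auto
    then have eP: "e \<notin> path_edges P" and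
      "\<exists>u v. e = {u, v} \<and> dist_to_path V E P u < dist_to_path V E P v \<and>
                 (\<exists>z\<in>component V (E - {e}) v. gdist V (E - {e}) v z \<ge> k - 1)"
      unfolding dkP_def by (auto split: if_splits)
    then obtain u v z where uv: "e = {u,v}" "dist_to_path V E P u < dist_to_path V E P v"
      "z \<in> component V (E - {e}) v" "gdist V (E - {e}) v z \<ge> k - 1" by blast
    show "\<exists>t. Q e t" unfolding Q_def
      using edge_lemma[OF as(1,2,4,5,7,8,9,10,11,12,14) eE uv(1) eP uv(2,3,4)] .
  qed
  then have "\<exists>f. \<forall>e\<in>A. Q e (f e)" by (rule bchoice)
  then obtain f where f: "\<forall>e\<in>A. Q e (f e)" by blast
  define B where "B = V - set (Cs!0)"
  define g where "g = (\<lambda>w. LEAST i. i < length Cs \<and> w \<in> set (Cs!i))"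
  have gp: "g w < length Cs \<and> w \<in> set (Cs!(g w)) \<and> (\<forall>i<g w. w \<notin> set (Cs!i)) \<and> g w \<noteq> 0"
    if "w \<in> B" for w
  proof -
    have wV: "w \<in> V" "w \<notin> set (Cs!0)" using that unfolding B_def by auto
    have "w \<in> (\<Union>C\<in>set Cs. set C)" using as(5) wV unfolding spanning_def by simp
    then obtain C where "C \<in> set Cs" "w \<in> set C" by blast
    then have ex: "\<exists>i. i < length Cs \<and> w \<in> set (Cs!i)" by (metis in_set_conv_nth)
    have 1: "g w < length Cs" "w \<in> set (Cs!(g w))" using LeastI_ex[OF ex] unfolding g_def by auto
    have 2: "\<forall>i<g w. w \<notin> set (Cs!i)"
    proof (intro allI impI)
      fix i assume i: "i < g w"
      have "\<not> (i < length Cs \<and> w \<in> set (Cs!i))"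
        using not_less_Least[where P="\<lambda>i. i < length Cs \<and> w \<in> set (Cs!i)"] i unfolding g_def by blast
      then show "w \<notin> set (Cs!i)" using i 1(1) by simp
    qed
    have "g w \<noteq> 0"
    proof
      assume "g w = 0" then show False using 1(2) wV(2) by simp
    qed
    then show ?thesis using 1 2 by blast
  qed
  have card1: "card (set (Cs!t) - set (Cs!(t-1))) = 1" if "0 < t" "t < length Cs" for t
    using W_card[OF as(4), of "t-1"] that by simp
  have injf: "inj_on f A"
  proof
    fix e1 e2 assume e: "e1 \<in> A" "e2 \<in> A" "f e1 = f e2"
    then have q1: "Q e1 (f e1)" and q2: "Q e2 (f e1)" using f by auto
    from q1 obtain a b where ab: "a \<in> set (Cs!(f e1-1))" "b \<in> set (Cs!f e1) - set (Cs!(f e1-1))"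
      "{a,b} \<in> E" unfolding Q_def by blast
    have "{a,b} = e1" using q1 ab unfolding Q_def by blast
    moreover have "{a,b} = e2" using q2 ab unfolding Q_def by blast
    ultimately show "e1 = e2" by simp
  qed
  have injg: "inj_on g B"
  proof
    fix w1 w2 assume w: "w1 \<in> B" "w2 \<in> B" "g w1 = g w2"
    have "w1 \<in> set (Cs!g w1) - set (Cs!(g w1 - 1))" using gp[OF w(1)] by simp
    moreover have "w2 \<in> set (Cs!g w1) - set (Cs!(g w1 - 1))" using gp[OF w(2)] w(3) by simp
    moreover have "card (set (Cs!g w1) - set (Cs!(g w1 - 1))) = 1" using card1 gp[OF w(1)] by simp
    ultimately show "w1 = w2" using card1_eq by metis
  qed
  have disj: "f ` A \<inter> g ` B = {}"
  proof (rule ccontr)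
    assume "f ` A \<inter> g ` B \<noteq> {}"
    then obtain e w where ew: "e \<in> A" "w \<in> B" "f e = g w" by blast
    then have q: "Q e (g w)" using f by metis
    then obtain w0 s where ws: "w0 \<in> set (Cs!g w)" "w0 \<notin> set (Cs!(g w-1))" "s < g w" "w0 \<in> set (Cs!s)"
      unfolding Q_def by blast
    have "w \<in> set (Cs!g w) - set (Cs!(g w - 1))" using gp[OF ew(2)] by simp
    moreover have "card (set (Cs!g w) - set (Cs!(g w - 1))) = 1" using card1 gp[OF ew(2)] by simp
    ultimately have "w0 = w" using ws card1_eq by (metis DiffI)
    then show False using gp[OF ew(2)] ws by blast
  qed
  have sub: "f ` A \<union> g ` B \<subseteq> {1..<length Cs}"
    using f gp unfolding Q_def by (auto simp: Suc_le_eq)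
  have "card A + card B = card (f ` A) + card (g ` B)"
    using card_image[OF injf] card_image[OF injg] by simp
  also have "\<dots> = card (f ` A \<union> g ` B)"
    using card_Un_disjoint[of "f ` A" "g ` B"] disj finA finV B_def by simp
  also have "\<dots> \<le> card {1..<length Cs}" by (rule card_mono) (use sub in auto)
  also have "\<dots> = hr V E k" using as(6) by simp
  finally have main: "card A + card B \<le> hr V E k" .
  have l0: "0 < length Cs" using as(8) by linarith
  have C0: "config V E k (Cs!0)" using W_cfg[OF as(4) l0] .
  then have "card (set (Cs!0)) = k" "set (Cs!0) \<subseteq> V"
    by (auto simp: config_def distinct_card)
  then have "card B = card V - k" unfolding B_def using finV by (simp add: card_Diff_subset finite_subset)
  then show ?thesis using main sumA by simp
qed

end
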